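(* For each $i \in [n]$, let $r_i$ be the number of elements $x_j$, $j \ne i$, that are larger than $x_i$ in the comparison graph. Let $S$ be any set of $\min\{n, 2k+1\}$ elements having the smallest values of $r_i$ (ties broken arbitrarily). Then $S$ contains the uncorrupted maximum.
   Context: Model: there are $n$ elements $x_1,\dots,x_n$, exactly $k$ of which are corrupted (unknown to the algorithm). For every pair of distinct elements the comparison graph (a tournament) specifies which one is larger. The comparison graph restricted to the $n-k$ uncorrupted elements is acyclic; comparisons involving corrupted elements may be oriented arbitrarily. The uncorrupted maximum is the uncorrupted element larger than every other uncorrupted element. *)

theory Defs
  imports Main
begin

text \<open>Elements are indexed by 0..<n. gt i j means: the comparison graph says x_i is larger than x_j.\<close>

definition is_tournament :: "nat \<Rightarrow> (nat \<Rightarrow> nat \<Rightarrow> bool) \<Rightarrow> bool" where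
  "is_tournament n gt \<longleftrightarrow>
     (\<forall>i<n. \<forall>j<n. i \<noteq> j \<longrightarrow> (gt i j \<longleftrightarrow> \<not> gt j i))"

definition restrict_graph :: "(nat \<Rightarrow> nat \<Rightarrow> bool) \<Rightarrow> nat set \<Rightarrow> (nat \<times> nat) set" where
  "restrict_graph gt U = {(i, j). i \<in> U \<and> j \<in> U \<and> i \<noteq> j \<and> gt i j}"

definition rank_count :: "nat \<Rightarrow> (nat \<Rightarrow> nat \<Rightarrow> bool) \<Rightarrow> nat \<Rightarrow> nat" where
  "rank_count n gt i = card {j. j < n \<and> j \<noteq> i \<and> gt j i}"

definition uncorrupted_max :: "nat \<Rightarrow> (nat \<Rightarrow> nat \<Rightarrow> bool) \<Rightarrow> nat set \<Rightarrow> nat \<Rightarrow> bool" where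
  "uncorrupted_max n gt C m \<longleftrightarrow>
     m < n \<and> m \<notin> C \<and> (\<forall>j<n. j \<notin> C \<longrightarrow> j \<noteq> m \<longrightarrow> gt m j)"

end

theory Submission
  imports Defs
begin

theorem mainTheorem2:
  fixes n k :: nat and gt :: "nat \<Rightarrow> nat \<Rightarrow> bool" and C S :: "nat set" and m :: nat
  assumes tour: "is_tournament n gt"
    and C_sub: "C \<subseteq> {..<n}" and C_card: "card C = k"
    and acyc: "acyclic (restrict_graph gt ({..<n} - C))"
    and S_sub: "S \<subseteq> {..<n}" and S_card: "card S = min n (2 * k + 1)"
    and S_small: "\<forall>i\<in>S. \<forall>j\<in>{..<n} - S. rank_count n gt i \<le> rank_count n gt j"
    and m_max: "uncorrupted_max n gt C m"
  shows "m \<in> S"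
proof (rule ccontr)
  assume mS: "m \<notin> S"
  have mn: "m < n" "m \<notin> C" and mbeat: "\<forall>j<n. j \<notin> C \<longrightarrow> j \<noteq> m \<longrightarrow> gt m j"
    using m_max unfolding uncorrupted_max_def by auto
  have "{j. j < n \<and> j \<noteq> m \<and> gt j m} \<subseteq> C"
    using mbeat tour mn unfolding is_tournament_def by blast
  hence rm: "rank_count n gt m \<le> k" unfolding rank_count_def
    using C_card card_mono[OF finite_subset[OF C_sub]] by auto
  have "S \<noteq> {..<n}" using mS mn by auto
  hence "card S < n" using S_sub using psubset_card_mono[of "{..<n}" S] by auto
  hence cS: "card S = 2*k+1" using S_card by auto
  define U where "U = S - C"
  have finS: "finite S" using S_sub finite_subset by blast
  have "card S \<le> card U + card (S \<inter> C)"
    proof -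
    have "S = U \<union> (S \<inter> C)" unfolding U_def by blast
    hence "card S = card (U \<union> (S \<inter> C))" by simp
    thus ?thesis using card_Un_le[of U "S \<inter> C"] by linarith
  qed
  moreover have "card (S \<inter> C) \<le> k"
    using C_card card_mono[OF finite_subset[OF C_sub]] by auto
  ultimately have cU: "card U \<ge> k+1" using cS by linarith
  have finU: "finite U" using finS U_def by auto
  have Une: "U \<noteq> {}" using cU by auto
  define R where "R = restrict_graph gt ({..<n} - C)"
  have finR: "finite R" unfolding R_def restrict_graph_def
    by (rule finite_subset[of _ "{..<n} \<times> {..<n}"]) auto
  have "acyclic (R\<inverse>)" using acyc unfolding R_def by (simp only: acyclic_converse)
  hence "wf (R\<inverse>)" using finR by (intro finite_acyclic_wf) simp_all
  then obtain u where uU: "u \<in> U" and umin: "\<forall>y. (y, u) \<in> R\<inverse> \<longrightarrow> y \<notin> U"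
    using Une wf_eq_minimal[of "R\<inverse>"] by blast
  have Usub: "U \<subseteq> {..<n} - C" using U_def S_sub by auto
  have "(U - {u}) \<union> {m} \<subseteq> {j. j < n \<and> j \<noteq> u \<and> gt j u}"
  proof
    fix j assume j: "j \<in> (U - {u}) \<union> {m}"
    show "j \<in> {j. j < n \<and> j \<noteq> u \<and> gt j u}"
    proof (cases "j = m")
      case True
      thus ?thesis using mbeat uU Usub mS U_def mn by auto
    next
      case False
      hence jU: "j \<in> U" "j \<noteq> u" using j by auto
      hence "\<not> gt u j" using umin Usub uU unfolding R_def restrict_graph_def by auto
      thus ?thesis using tour jU Usub uU unfolding is_tournament_def by auto
    qed
  qed
  hence "card ((U - {u}) \<union> {m}) \<le> rank_count n gt u" unfolding rank_count_def
    by (intro card_mono) auto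
  moreover have "card ((U - {u}) \<union> {m}) = card U"
    proof -
    have "card U > 0" using finU uU card_gt_0_iff by blast
    moreover have "m \<notin> U - {u}" using mS U_def by auto
    ultimately show ?thesis using finU uU by (simp add: card_Diff_singleton)
  qed
  ultimately have "rank_count n gt u \<ge> k+1" using cU by linarith
  moreover have "rank_count n gt u \<le> rank_count n gt m"
    using S_small uU U_def mS mn by auto
  ultimately show False using rm by linarith
qed

end
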